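(* Let $G=(V,E)$ be a finite simple graph with maximum degree $\Delta$, let $w\in(0,1)$ and $M\subseteq E$. Then for all $A\in\mathcal W=\mathcal C_0\cup\mathcal C_2$ and all edges $e=\{u,v\}\in E$ with $A\oplus e\in\mathcal W$, \[ \Psi(A)\,\lambda(A)\,P(A,A\oplus e)\;\ge\;\frac{w^{|(A\oplus M)\cup e|}}{2\Delta}\;\ge\;\frac{w^{|(A\cup e)\oplus M|}}{2\Delta w^{-1}} . \]
   Context: Subgraphs of $G$ are identified with edge subsets $A\subseteq E$; $\oplus$ denotes symmetric difference, $(A\oplus M)\cup e$ means $(A\oplus M)\cup\{e\}$, $d(u)$ is the degree of $u$ in $G$, and $\partial A$ is the set of vertices of odd degree in $(V,A)$. $\mathcal C_k=\{A\subseteq E:|\partial A|=k\}$. $\lambda(A)=w^{|A\oplus M|}$. $\Psi(A)=|V|$ if $A\in\mathcal C_0$ and $\Psi(A)=2$ if $A\in\mathcal C_2$. $P$ is the transition matrix of the lazy worm process: for $A\in\mathcal W$ and $e=uv\in E$ with $A\oplus e\in\mathcal W$, (i) if $A\in\mathcal C_0$: $P(A,A\oplus e)=w^{\mathbf 1[e\notin A\oplus M]}\frac{1}{2|V|}\bigl(\frac1{d(u)}+\frac1{d(v)}\bigr)$; (ii) if $A\in\mathcal C_2$ and $A\oplus e\in\mathcal C_0$: $P(A,A\oplus e)=w^{\mathbf 1[e\notin A\oplus M]}\frac14\bigl(\frac1{d(u)}+\frac1{d(v)}\bigr)$; (iii) if $A\in\mathcal C_2$, $A\oplus e\in\mathcal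 C_2$ and $u\in\partial A$: $P(A,A\oplus e)=\min\!\bigl(\frac{d(u)}{d(v)}w^{\mathbf 1[e\notin A\oplus M]-\mathbf 1[e\in A\oplus M]},1\bigr)\frac{1}{4d(u)}$. *)

theory Defs
  imports Complex_Main
begin

definition simple_graph :: "'a set \<Rightarrow> 'a set set \<Rightarrow> bool" where
  "simple_graph V E \<longleftrightarrow> finite V \<and> (\<forall>e\<in>E. \<exists>u v. u \<in> V \<and> v \<in> V \<and> u \<noteq> v \<and> e = {u, v})"

definition symdiff :: "'b set \<Rightarrow> 'b set \<Rightarrow> 'b set" where
  "symdiff A B = (A - B) \<union> (B - A)"

definition deg :: "'a set set \<Rightarrow> 'a \<Rightarrow> nat" where
  "deg A u = card {e \<in> A. u \<in> e}"

definition max_degree :: "'a set \<Rightarrow> 'a set set \<Rightarrow> nat" where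
  "max_degree V E = Max (deg E ` V)"

definition bdry :: "'a set \<Rightarrow> 'a set set \<Rightarrow> 'a set" where
  "bdry V A = {v \<in> V. odd (deg A v)}"

definition Ck :: "'a set \<Rightarrow> 'a set set \<Rightarrow> nat \<Rightarrow> 'a set set set" where
  "Ck V E k = {A. A \<subseteq> E \<and> card (bdry V A) = k}"

definition Wset :: "'a set \<Rightarrow> 'a set set \<Rightarrow> 'a set set set" where
  "Wset V E = Ck V E 0 \<union> Ck V E 2"

definition lam :: "real \<Rightarrow> 'a set set \<Rightarrow> 'a set set \<Rightarrow> real" where
  "lam w M A = w ^ card (symdiff A M)"

definition Psi :: "'a set \<Rightarrow> 'a set set \<Rightarrow> 'a set set \<Rightarrow> real" where
  "Psi V E A = (if A \<in> Ck V E 0 then real (card V) else if A \<in> Ck V E 2 then 2 else 0)"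

definition ind :: "bool \<Rightarrow> int" where
  "ind b = (if b then 1 else 0)"

text \<open>Case (iii) with u the endpoint of e = uv lying in \<partial>A.\<close>
definition P_move :: "'a set set \<Rightarrow> 'a set set \<Rightarrow> real \<Rightarrow> 'a set set \<Rightarrow> 'a \<Rightarrow> 'a \<Rightarrow> real" where
  "P_move E M w A u v =
     (let e = {u, v}; B = symdiff A M in
      min ((real (deg E u) / real (deg E v)) * w powi (ind (e \<notin> B) - ind (e \<in> B))) 1
        * (1 / (4 * real (deg E u))))"

text \<open>Transition probability P(A, A \<oplus> e) of the lazy worm process, e = {u, v},
  defined for A \<in> W and A \<oplus> e \<in> W.\<close>
definition P_worm :: "'a set \<Rightarrow> 'a set set \<Rightarrow> 'a set set \<Rightarrow> real \<Rightarrow> 'a set set \<Rightarrow> 'a \<Rightarrow> 'a \<Rightarrow> real" where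
  "P_worm V E M w A u v =
     (let e = {u, v}; A' = symdiff A {e};
          f = w ^ (if e \<notin> symdiff A M then 1 else 0) in
      if A \<in> Ck V E 0 then
        f * (1 / (2 * real (card V))) * (1 / real (deg E u) + 1 / real (deg E v))
      else if A \<in> Ck V E 2 \<and> A' \<in> Ck V E 0 then
        f * (1 / 4) * (1 / real (deg E u) + 1 / real (deg E v))
      else if A \<in> Ck V E 2 \<and> A' \<in> Ck V E 2 then
        (if u \<in> bdry V A then P_move E M w A u v else P_move E M w A v u)
      else 0)"

end

theory Submission
  imports Defs
begin

lemma card_B_e:
  assumes "finite B"
  shows "card (B \<union> {e}) = card B + (if e \<notin> B then 1 else 0)"
  using assms by (auto simp: insert_absorb)

lemma card_symdiff_cmp:
  assumes "finite A" "finite M"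
  shows "card (symdiff A M \<union> {e}) \<le> card (symdiff (A \<union> {e}) M) + 1"
proof -
  have "symdiff A M \<union> {e} \<subseteq> insert e (symdiff (A \<union> {e}) M)"
    by (auto simp: symdiff_def)
  moreover have "finite (symdiff (A \<union> {e}) M)" using assms by (simp add: symdiff_def)
  ultimately have "card (symdiff A M \<union> {e}) \<le> card (insert e (symdiff (A \<union> {e}) M))"
    by (intro card_mono) auto
  also have "\<dots> \<le> card (symdiff (A \<union> {e}) M) + 1"
    using \<open>finite (symdiff (A \<union> {e}) M)\<close> by (simp add: card_insert_if)
  finally show ?thesis .
qed

theorem lemma1:
  fixes V :: "'a set" and E M A :: "'a set set" and w :: real and u v :: 'a
  assumes "simple_graph V E"
    and "0 < w" and "w < 1"
    and "M \<subseteq> E"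
    and "A \<in> Wset V E"
    and "{u, v} \<in> E"
    and "symdiff A {{u, v}} \<in> Wset V E"
  shows "Psi V E A * lam w M A * P_worm V E M w A u v
           \<ge> w ^ card (symdiff A M \<union> {{u, v}}) / (2 * real (max_degree V E))
       \<and> w ^ card (symdiff A M \<union> {{u, v}}) / (2 * real (max_degree V E))
           \<ge> w ^ card (symdiff (A \<union> {{u, v}}) M) / (2 * real (max_degree V E) * inverse w)"
proof -
  have fV: "finite V" and Eform: "\<forall>e\<in>E. \<exists>a b. a \<in> V \<and> b \<in> V \<and> a \<noteq> b \<and> e = {a, b}"
    using assms(1) by (auto simp: simple_graph_def)
  have "E \<subseteq> Pow V"
  proof
    fix f assume "f \<in> E"
    then obtain a b where "a \<in> V" "b \<in> V" "f = {a, b}" using Eform by meson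
    thus "f \<in> Pow V" by simp
  qed
  hence fE: "finite E" using fV by (meson finite_Pow_iff finite_subset)
  have AE: "A \<subseteq> E" using assms(5) by (auto simp: Wset_def Ck_def)
  hence fA: "finite A" using fE by (rule finite_subset)
  have fM: "finite M" using assms(4) fE by (rule finite_subset)
  define e where "e = {u, v}"
  define B where "B = symdiff A M"
  have fB: "finite B" using fA fM by (simp add: B_def symdiff_def)
  obtain a b where ab: "a \<in> V" "b \<in> V" "a \<noteq> b" "e = {a,b}" using Eform assms(6) e_def by meson
  have uV: "u \<in> V" and vV: "v \<in> V" and uv: "u \<noteq> v" using ab e_def by (auto simp: doubleton_eq_iff)
  define D where "D = real (max_degree V E)"
  have degpos: "deg E x \<ge> 1" if "x \<in> e" for x
  proof -
    have "e \<in> {f \<in> E. x \<in> f}" using that assms(6) e_def by auto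
    moreover have "finite {f \<in> E. x \<in> f}" using fE by simp
    ultimately have "card {f \<in> E. x \<in> f} \<noteq> 0" by auto
    thus ?thesis by (simp add: deg_def)
  qed
  have degle: "deg E x \<le> max_degree V E" if "x \<in> V" for x
    unfolding max_degree_def using fV that by (intro Max_ge) auto
  have du1: "real (deg E u) \<ge> 1" and dv1: "real (deg E v) \<ge> 1" using degpos e_def by auto
  have duD: "real (deg E u) \<le> D" and dvD: "real (deg E v) \<le> D" using degle uV vV D_def by auto
  have D1: "D \<ge> 1" using du1 duD by linarith
  define c where "c = card (B \<union> {e})"
  have cB: "c = card B + (if e \<notin> B then 1 else 0)" using card_B_e[OF fB] c_def by simp
  have wc: "w ^ card B * w ^ (if e \<notin> B then 1 else 0) = w ^ c"
    by (simp add: cB power_add)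
  have inv_le: "1 / D \<le> 1 / real (deg E x)" if "x \<in> e" for x
  proof -
    have "x = u \<or> x = v" using that e_def by auto
    hence "real (deg E x) \<le> D" "real (deg E x) \<ge> 1" using duD dvD du1 dv1 by auto
    thus ?thesis by (simp add: frac_le)
  qed
  have wcpos: "w ^ c > 0" using assms(2) by simp
  have sum_ge: "w ^ c / (2 * D) \<le> w ^ c / 2 * (1 / real (deg E u) + 1 / real (deg E v))"
  proof -
    have "1 / D \<le> 1 / real (deg E u)" using inv_le e_def by auto
    moreover have "0 \<le> 1 / real (deg E v)" by simp
    ultimately have "1 / D \<le> 1 / real (deg E u) + 1 / real (deg E v)" by linarith
    hence "w ^ c / 2 * (1 / D) \<le> w ^ c / 2 * (1 / real (deg E u) + 1 / real (deg E v))"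
      using wcpos by (intro mult_left_mono) auto
    thus ?thesis by simp
  qed
  have first: "Psi V E A * lam w M A * P_worm V E M w A u v \<ge> w ^ c / (2 * D)"
  proof (cases "A \<in> Ck V E 0")
    case True
    have n0: "real (card V) > 0" using fV uV card_gt_0_iff by fastforce
    have "Psi V E A * lam w M A * P_worm V E M w A u v
        = real (card V) * (w ^ card B * w ^ (if e \<notin> B then 1 else 0)) * (1 / (2 * real (card V)))
           * (1 / real (deg E u) + 1 / real (deg E v))"
      using True by (simp add: Psi_def lam_def P_worm_def B_def e_def Let_def)
    also have "\<dots> = w ^ c / 2 * (1 / real (deg E u) + 1 / real (deg E v))"
      using n0 wc by (simp add: field_simps)
    finally show ?thesis using sum_ge by simp
  next
    case F0: False
    have A2: "A \<in> Ck V E 2" using F0 assms(5) by (auto simp: Wset_def)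
    show ?thesis
    proof (cases "symdiff A {e} \<in> Ck V E 0")
      case True
      have "Psi V E A * lam w M A * P_worm V E M w A u v
          = 2 * (w ^ card B * w ^ (if e \<notin> B then 1 else 0)) * (1 / 4)
             * (1 / real (deg E u) + 1 / real (deg E v))"
        using True F0 A2 by (simp add: Psi_def lam_def P_worm_def B_def e_def Let_def)
      also have "\<dots> = w ^ c / 2 * (1 / real (deg E u) + 1 / real (deg E v))"
        using wc by (simp add: field_simps)
      finally show ?thesis using sum_ge by simp
    next
      case False
      have A'2: "symdiff A {e} \<in> Ck V E 2" using False assms(7) e_def by (auto simp: Wset_def)
      have key: "2 * w ^ card B * P_move E M w A x y \<ge> w ^ c / (2 * D)"
        if xy: "{x, y} = e" for x y
      proof -
        have xe: "x \<in> e" and ye: "y \<in> e" using xy by auto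
        have dx1: "real (deg E x) \<ge> 1" and dy1: "real (deg E y) \<ge> 1" using degpos xe ye by auto
        have dxD: "1 / D \<le> 1 / real (deg E x)" and dyD: "1 / D \<le> 1 / real (deg E y)"
          using inv_le xe ye by auto
        define s where "s = w powi (ind (e \<notin> B) - ind (e \<in> B))"
        have Pm: "P_move E M w A x y = min (real (deg E x) / real (deg E y) * s) 1 * (1 / (4 * real (deg E x)))"
          by (simp add: P_move_def Let_def xy s_def B_def)
        have spos: "s > 0" using assms(2) by (simp add: s_def)
        have ws: "w ^ card B * s \<ge> w ^ c"
        proof (cases "e \<in> B")
          case True
          have "s = inverse w" by (simp add: s_def ind_def True power_int_minus)
          moreover have "c = card B" using cB True by simp
          moreover have "inverse w \<ge> 1" using assms(2,3) by (simp add: one_le_inverse)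
          moreover have "w ^ card B \<ge> 0" using assms(2) by simp
          ultimately show ?thesis using mult_left_mono[of 1 "inverse w" "w ^ card B"] by simp
        next
          case False
          have "s = w" by (simp add: s_def ind_def False)
          moreover have "c = card B + 1" using cB False by simp
          ultimately show ?thesis by simp
        qed
        have wB: "w ^ card B \<ge> w ^ c" using cB assms(2,3) by (intro power_decreasing) auto
        show ?thesis
        proof (cases "real (deg E x) / real (deg E y) * s \<le> 1")
          case True
          have "2 * w ^ card B * P_move E M w A x y = (w ^ card B * s) / 2 * (1 / real (deg E y))"
            using True dx1 dy1 by (simp add: Pm field_simps)
          also have "\<dots> \<ge> w ^ c / 2 * (1 / D)"
            using ws dyD wcpos D1 by (intro mult_mono) auto
          finally show ?thesis by simp
        next
          case False
          have "2 * w ^ card B * P_move E M w A x y = w ^ card B / 2 * (1 / real (deg E x))"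
            using False dx1 dy1 by (simp add: Pm field_simps)
          also have "\<dots> \<ge> w ^ c / 2 * (1 / D)"
            using wB dxD wcpos D1 by (intro mult_mono) auto
          finally show ?thesis by simp
        qed
      qed
      have "Psi V E A * lam w M A * P_worm V E M w A u v
          = 2 * w ^ card B * (if u \<in> bdry V A then P_move E M w A u v else P_move E M w A v u)"
        using False F0 A2 A'2 by (simp add: Psi_def lam_def P_worm_def B_def e_def Let_def)
      also have "\<dots> \<ge> w ^ c / (2 * D)"
        using key[of u v] key[of v u] e_def by (auto simp: insert_commute)
      finally show ?thesis .
    qed
  qed
  have second: "w ^ c / (2 * D) \<ge> w ^ card (symdiff (A \<union> {e}) M) / (2 * D * inverse w)"
  proof -
    have cc: "c \<le> card (symdiff (A \<union> {e}) M) + 1"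
      using card_symdiff_cmp[OF fA fM] c_def B_def by simp
    have "w ^ card (symdiff (A \<union> {e}) M) / (2 * D * inverse w)
          = w ^ (card (symdiff (A \<union> {e}) M) + 1) / (2 * D)"
      using assms(2) by (simp add: field_simps)
    also have "\<dots> \<le> w ^ c / (2 * D)"
      using cc assms(2,3) D1 by (intro divide_right_mono power_decreasing) auto
    finally show ?thesis .
  qed
  show ?thesis using first second by (simp add: c_def B_def e_def D_def)
qed

end
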